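(* Place the almost positive roots of type $C_n$ in the off-diagonal entries of an $(n+1)\times(n+1)$ array via: entry $(1,j)$ ($2\le j\le n+1$) is $-\alpha_{j-1}$; entry $(i,j)$ with $2\le i<j$ is $\varepsilon_{i-1}-\varepsilon_{j-1}$; entry $(i,j)$ with $i>j$ is $\varepsilon_j+\varepsilon_{i-1}$. Then any two almost positive roots lying in the same row or in the same column of this array are $\underline c$-compatible.
   Context: Type $C_n$: standard basis $\varepsilon_i$ of $\mathbb{R}^n$, simple roots $\alpha_i=\varepsilon_i-\varepsilon_{i+1}$ ($i<n$), $\alpha_n=2\varepsilon_n$, $\Pi$ the simple roots, $\Phi_+=\{\varepsilon_i\pm\varepsilon_j:i<j\}\cup\{2\varepsilon_i\}$, $\Phi_{\ge-1}=\Phi_+\sqcup(-\Pi)$. With simple reflections $s_i$ and $c=s_1\cdots s_n$, $\tau:\Phi_{\ge-1}\to\Phi_{\ge-1}$ is $\tau(-\alpha_i)=s_1\cdots s_{i-1}(\alpha_i)$, $\tau(s_n\cdots s_{i+1}(\alpha_i))=-\alpha_i$, $\tau(\alpha)=c(\alpha)$ otherwise. The $\underline c$-compatibility degree is the unique $\tau$-invariant function $\Phi_{\ge-1}^2\to\mathbb{Z}$ with $(-\alpha\|_{\underline c}-\alpha')=0$ for $\alpha,\alpha'\in\Pi$ and $(-\alpha\|_{\underline c}\beta)=[\beta:\alpha]$ (coefficient of $\alpha$ in $\beta$) for $\alpha\in\Pi,\beta\in\Phi_+$; two roots are $\underline c$-compatible if their degree is $0$. *)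

theory Defs
  imports Complex_Main "HOL-Library.Function_Algebras"
begin

text \<open>Vectors of R^n are modelled as functions nat => real, with coordinates
indexed by 1..n (coordinates outside 1..n are zero for all vectors we use).\<close>

type_synonym vec = "nat \<Rightarrow> real"

definition smul :: "real \<Rightarrow> vec \<Rightarrow> vec" where
  "smul c v = (\<lambda>k. c * v k)"

definition eps :: "nat \<Rightarrow> vec" where
  "eps i = (\<lambda>k. if k = i then 1 else 0)"

definition dotC :: "nat \<Rightarrow> vec \<Rightarrow> vec \<Rightarrow> real" where
  "dotC n u v = (\<Sum>k\<in>{1..n}. u k * v k)"

definition alpha :: "nat \<Rightarrow> nat \<Rightarrow> vec" where
  "alpha n i = (if i < n then eps i - eps (Suc i) else smul 2 (eps n))"

definition simple_roots :: "nat \<Rightarrow> vec set" where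
  "simple_roots n = alpha n ` {1..n}"

definition pos_roots :: "nat \<Rightarrow> vec set" where
  "pos_roots n =
     {eps i - eps j | i j. 1 \<le> i \<and> i < j \<and> j \<le> n}
   \<union> {eps i + eps j | i j. 1 \<le> i \<and> i < j \<and> j \<le> n}
   \<union> {smul 2 (eps i) | i. 1 \<le> i \<and> i \<le> n}"

definition almost_pos :: "nat \<Rightarrow> vec set" where
  "almost_pos n = pos_roots n \<union> uminus ` simple_roots n"

definition refl :: "nat \<Rightarrow> vec \<Rightarrow> vec \<Rightarrow> vec" where
  "refl n a v = v - smul (2 * dotC n v a / dotC n a a) a"

definition sref :: "nat \<Rightarrow> nat \<Rightarrow> vec \<Rightarrow> vec" where
  "sref n i = refl n (alpha n i)"

definition sprod :: "nat \<Rightarrow> nat list \<Rightarrow> vec \<Rightarrow> vec" where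
  "sprod n is v = foldr (sref n) is v"

definition cox :: "nat \<Rightarrow> vec \<Rightarrow> vec" where
  "cox n = sprod n [1..<Suc n]"

definition tau :: "nat \<Rightarrow> vec \<Rightarrow> vec" where
  "tau n b =
    (if \<exists>i\<in>{1..n}. b = - alpha n i then
       (let i = (THE i. i \<in> {1..n} \<and> b = - alpha n i)
        in sprod n [1..<i] (alpha n i))
     else if \<exists>i\<in>{1..n}. b = sprod n (rev [Suc i..<Suc n]) (alpha n i) then
       (let i = (THE i. i \<in> {1..n} \<and> b = sprod n (rev [Suc i..<Suc n]) (alpha n i))
        in - alpha n i)
     else cox n b)"

definition coeff :: "nat \<Rightarrow> vec \<Rightarrow> nat \<Rightarrow> real" where
  "coeff n b i = (THE c. (\<forall>k. k \<notin> {1..n} \<longrightarrow> c k = 0) \<and>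
                        b = (\<Sum>k\<in>{1..n}. smul (c k) (alpha n k))) i"

definition is_compat_degree :: "nat \<Rightarrow> (vec \<Rightarrow> vec \<Rightarrow> int) \<Rightarrow> bool" where
  "is_compat_degree n f \<longleftrightarrow>
     (\<forall>a\<in>almost_pos n. \<forall>b\<in>almost_pos n. f (tau n a) (tau n b) = f a b)
   \<and> (\<forall>i\<in>{1..n}. \<forall>j\<in>{1..n}. f (- alpha n i) (- alpha n j) = 0)
   \<and> (\<forall>i\<in>{1..n}. \<forall>b\<in>pos_roots n. real_of_int (f (- alpha n i) b) = coeff n b i)"

definition compat_degree :: "nat \<Rightarrow> vec \<Rightarrow> vec \<Rightarrow> int" where
  "compat_degree n = (THE f. is_compat_degree n f \<and>
     (\<forall>a b. \<not> (a \<in> almost_pos n \<and> b \<in> almost_pos n) \<longrightarrow> f a b = 0))"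

definition compatible :: "nat \<Rightarrow> vec \<Rightarrow> vec \<Rightarrow> bool" where
  "compatible n a b \<longleftrightarrow> compat_degree n a b = 0"

definition entry :: "nat \<Rightarrow> nat \<Rightarrow> nat \<Rightarrow> vec" where
  "entry n i j =
    (if i = 1 then - alpha n (j - 1)
     else if i < j then eps (i - 1) - eps (j - 1)
     else eps j + eps (i - 1))"

end

theory Submission
  imports Defs "HOL-Number_Theory.Cong"
begin

lemma sum_fun_app: "(sum f A) x = sum (\<lambda>k. f k x) A"
  by (induct A rule: infinite_finite_induct) auto

lemma sum_eps: "finite A \<Longrightarrow> (\<Sum>x\<in>A. v x * eps k x) = (if k \<in> A then v k else 0)"
  unfolding eps_def by (simp add: if_distrib cong: if_cong)

lemma dot_eps: "dotC n v (eps k) = (if k \<in> {1..n} then v k else 0)"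
  unfolding dotC_def by (rule sum_eps) simp

lemma dot_diff: "dotC n v (a - b) = dotC n v a - dotC n v b"
  unfolding dotC_def by (simp add: sum_subtractf right_diff_distrib)

lemma dot_smul: "dotC n v (smul c a) = c * dotC n v a"
  unfolding dotC_def smul_def by (simp add: sum_distrib_left mult_ac)

lemma sref_lt:
  assumes "1 \<le> k" "k < n"
  shows "sref n k v = (\<lambda>x. if x = k then v (Suc k) else if x = Suc k then v k else v x)"
proof -
  have d1: "dotC n v (eps k - eps (Suc k)) = v k - v (Suc k)"
    using assms by (simp add: dot_diff dot_eps)
  have d2: "dotC n (eps k - eps (Suc k)) (eps k - eps (Suc k)) = 2"
    using assms by (simp add: dot_diff dot_eps) (simp add: eps_def)
  have a: "alpha n k = eps k - eps (Suc k)" using assms by (simp add: alpha_def)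
  show ?thesis using assms
    unfolding sref_def refl_def a d1 d2 by (auto simp: smul_def eps_def fun_eq_iff field_simps)
qed

lemma sref_n:
  assumes "1 \<le> n"
  shows "sref n n v = (\<lambda>x. if x = n then - v n else v x)"
proof -
  have d1: "dotC n v (smul 2 (eps n)) = 2 * v n"
    using assms by (simp add: dot_smul dot_eps)
  have d2: "dotC n (smul 2 (eps n)) (smul 2 (eps n)) = 4"
    using assms by (simp add: dot_smul dot_eps) (simp add: eps_def smul_def)
  have a: "alpha n n = smul 2 (eps n)" by (simp add: alpha_def)
  show ?thesis using assms
    unfolding sref_def refl_def a d1 d2 by (auto simp: smul_def eps_def fun_eq_iff field_simps)
qed

lemma sprod_rot:
  assumes "1 \<le> i" "i \<le> n"
  shows "sprod n [1..<i] v = (\<lambda>x. if x = 1 then v i else if 2 \<le> x \<and> x \<le> i then v (x-1) else v x)"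
  using assms
proof (induct i arbitrary: v rule: nat_induct_at_least)
  case base
  then show ?case by (auto simp: sprod_def fun_eq_iff)
next
  case (Suc i)
  have "sprod n [1..<Suc i] v = sprod n [1..<i] (sref n i v)"
    using Suc.hyps by (simp add: sprod_def)
  also have "\<dots> = (\<lambda>x. if x = 1 then sref n i v i else if 2 \<le> x \<and> x \<le> i then sref n i v (x-1) else sref n i v x)"
    using Suc by simp
  also have "\<dots> = (\<lambda>x. if x = 1 then v (Suc i) else if 2 \<le> x \<and> x \<le> Suc i then v (x-1) else v x)"
    using Suc by (auto simp: sref_lt fun_eq_iff)
  finally show ?case .
qed

lemma cox_eq:
  assumes "1 \<le> n"
  shows "cox n v = (\<lambda>x. if x = 1 then - v n else if 2 \<le> x \<and> x \<le> n then v (x-1) else v x)"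
proof -
  have "cox n v = sprod n [1..<n] (sref n n v)"
    using assms by (simp add: cox_def sprod_def)
  also have "\<dots> = (\<lambda>x. if x = 1 then sref n n v n else if 2 \<le> x \<and> x \<le> n then sref n n v (x-1) else sref n n v x)"
    by (rule sprod_rot[OF assms order_refl])
  also have "\<dots> = (\<lambda>x. if x = 1 then - v n else if 2 \<le> x \<and> x \<le> n then v (x-1) else v x)"
    using assms by (auto simp: sref_n fun_eq_iff)
  finally show ?thesis .
qed

lemma sprod_G:
  assumes "1 \<le> i" "i \<le> m" "m < n"
  shows "foldr (sref n) (rev [Suc i..<Suc m]) v =
    (\<lambda>x. if Suc i \<le> x \<and> x \<le> m then v (Suc x) else if x = Suc m then v (Suc i) else v x)"
  using assms(2,3)
proof (induct m rule: nat_induct_at_least)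
  case base
  then show ?case by (auto simp: fun_eq_iff)
next
  case (Suc m)
  have IH: "foldr (sref n) (rev [Suc i..<Suc m]) v = (\<lambda>x. if Suc i \<le> x \<and> x \<le> m then v (Suc x) else if x = Suc m then v (Suc i) else v x)"
    using Suc by simp
  have "foldr (sref n) (rev [Suc i..<Suc (Suc m)]) v = sref n (Suc m) (foldr (sref n) (rev [Suc i..<Suc m]) v)"
    using Suc.hyps by (simp del: upt_Suc add: upt_Suc_append)
  also have "\<dots> = sref n (Suc m) (\<lambda>x. if Suc i \<le> x \<and> x \<le> m then v (Suc x) else if x = Suc m then v (Suc i) else v x)"
    by (simp only: IH)
  also have "\<dots> = (\<lambda>x. if Suc i \<le> x \<and> x \<le> Suc m then v (Suc x) else if x = Suc (Suc m) then v (Suc i) else v x)"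
    using Suc assms(1) by (auto simp: sref_lt fun_eq_iff)
  finally show ?case .
qed

lemma sprod_Q:
  assumes "1 \<le> i" "i \<le> n"
  shows "sprod n (rev [Suc i..<Suc n]) (alpha n i) = eps i + eps n"
proof (cases "i = n")
  case True
  then show ?thesis by (auto simp: sprod_def alpha_def smul_def eps_def fun_eq_iff)
next
  case False
  then have "rev [Suc i..<Suc n] = n # rev [Suc i..<Suc (n-1)]" using assms by (cases n) auto
  then have "sprod n (rev [Suc i..<Suc n]) (alpha n i) = sref n n (foldr (sref n) (rev [Suc i..<Suc (n-1)]) (alpha n i))"
    by (simp add: sprod_def del: upt_Suc)
  also have "\<dots> = sref n n (\<lambda>x. if Suc i \<le> x \<and> x \<le> n-1 then alpha n i (Suc x) else if x = Suc (n-1) then alpha n i (Suc i) else alpha n i x)"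
    using assms False by (subst sprod_G) auto
  also have "\<dots> = eps i + eps n"
    using assms False by (auto simp: sref_n alpha_def eps_def fun_eq_iff)
  finally show ?thesis .
qed

definition PP :: "nat \<Rightarrow> (nat \<times> nat) set" where
  "PP n = {(i,j). i \<in> {1..Suc n} \<and> j \<in> {1..Suc n} \<and> i \<noteq> j}"

definition sh :: "nat \<Rightarrow> nat \<Rightarrow> nat" where
  "sh n x = (if x = Suc n then 1 else Suc x)"

lemma alpha_neg_inj:
  assumes "p \<in> {1..n}" "q \<in> {1..n}" "- alpha n p = - alpha n q"
  shows "p = q"
proof (rule ccontr)
  assume ne: "p \<noteq> q"
  have "alpha n p p = alpha n q p" using assms(3) by (metis minus_equation_iff)
  then show False using assms(1,2) ne by (auto simp: alpha_def eps_def smul_def split: if_splits)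
qed

lemma entry_notneg:
  assumes "2 \<le> i" "i \<le> Suc n" "j \<in> {1..Suc n}" "i \<noteq> j" "k \<in> {1..n}"
  shows "entry n i j \<noteq> - alpha n k"
proof
  assume eq: "entry n i j = - alpha n k"
  show False
  proof (cases "i < j")
    case True
    then have e: "entry n i j = eps (i-1) - eps (j-1)" using assms by (simp add: entry_def)
    have 1: "entry n i j (i-1) = (- alpha n k) (i-1)" using eq by simp
    have 2: "entry n i j (i-2) = (- alpha n k) (i-2)" using eq by simp
    show False using 1 2 assms True unfolding e by (auto simp: alpha_def eps_def smul_def split: if_splits)
  next
    case False
    then have e: "entry n i j = eps j + eps (i-1)" using assms by (simp add: entry_def)
    have 1: "entry n i j k = (- alpha n k) k" using eq by simp
    show False using 1 assms False unfolding e by (auto simp: alpha_def eps_def smul_def split: if_splits)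
  qed
qed

lemma entry_notQ:
  assumes "2 \<le> i" "i \<le> n" "j \<in> {1..Suc n}" "i \<noteq> j" "k \<in> {1..n}"
  shows "entry n i j \<noteq> eps k + eps n"
proof
  assume eq: "entry n i j = eps k + eps n"
  show False
  proof (cases "i < j")
    case True
    then have e: "entry n i j = eps (i-1) - eps (j-1)" using assms by (simp add: entry_def)
    have 1: "entry n i j (j-1) = (eps k + eps n) (j-1)" using eq by simp
    show False using 1 assms True unfolding e by (auto simp: eps_def split: if_splits)
  next
    case False
    then have e: "entry n i j = eps j + eps (i-1)" using assms by (simp add: entry_def)
    have 1: "entry n i j n = (eps k + eps n) n" using eq by simp
    show False using 1 assms False unfolding e by (auto simp: eps_def split: if_splits)
  qed
qed

lemma Q_inj: "eps j + eps n = eps k + eps n \<Longrightarrow> j = k"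
proof -
  assume "eps j + eps n = eps k + eps n"
  then have "(eps j + eps n) j = (eps k + eps n) j" by simp
  then show "j = k" by (auto simp: eps_def split: if_splits)
qed


lemma tau_entry:
  assumes n: "1 \<le> n" and ij: "(i,j) \<in> PP n"
  shows "tau n (entry n i j) = entry n (sh n i) (sh n j)"
proof -
  from ij have i: "i \<in> {1..Suc n}" and j: "j \<in> {1..Suc n}" and ne: "i \<noteq> j" by (auto simp: PP_def)
  consider "i = 1" | "i = Suc n" | "2 \<le> i" "i \<le> n" using i by force
  then show ?thesis
  proof cases
    case 1
    then have e: "entry n i j = - alpha n (j-1)" by (simp add: entry_def)
    have jj: "j - 1 \<in> {1..n}" using j ne 1 by auto
    have th: "(THE p. p \<in> {1..n} \<and> - alpha n (j-1) = - alpha n p) = j - 1"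
      by (rule the_equality) (use jj alpha_neg_inj in auto)
    have c1: "\<exists>p\<in>{1..n}. - alpha n (j-1) = - alpha n p" using jj by blast
    have "tau n (entry n i j) = sprod n [1..<j-1] (alpha n (j-1))"
      unfolding e tau_def by (simp only: c1 if_True Let_def th)
    also have "\<dots> = (\<lambda>x. if x = 1 then alpha n (j-1) (j-1) else if 2 \<le> x \<and> x \<le> j-1 then alpha n (j-1) (x-1) else alpha n (j-1) x)"
      by (rule sprod_rot) (use jj in auto)
    also have "\<dots> = entry n (sh n i) (sh n j)"
    proof (cases "j = Suc n")
      case True
      have a: "alpha n (j-1) = smul 2 (eps n)" using True by (simp add: alpha_def)
      have t: "entry n (sh n i) (sh n j) = eps 1 + eps 1" using True 1 n by (simp add: sh_def entry_def)
      show ?thesis unfolding a t using True n by (auto simp: eps_def smul_def fun_eq_iff)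
    next
      case False
      then have jn: "j \<le> n" "2 \<le> j" using j ne 1 by auto
      have jl: "j - 1 < n" "Suc (j-1) = j" using jn by arith+
      have a: "alpha n (j-1) = eps (j-1) - eps j" unfolding alpha_def using jl by simp
      have t: "entry n (sh n i) (sh n j) = eps 1 - eps j" using jn 1 n by (simp add: sh_def entry_def)
      show ?thesis unfolding a t using jn by (auto simp: eps_def fun_eq_iff) linarith
    qed
    finally show ?thesis .
  next
    case 2
    then have jj: "j \<in> {1..n}" using j ne by auto
    then have e: "entry n i j = eps j + eps n" using 2 by (auto simp: entry_def)
    have nn: "\<not> (\<exists>k\<in>{1..n}. entry n i j = - alpha n k)"
      using entry_notneg[of i n j] 2 j ne n by auto
    have Q: "entry n i j = sprod n (rev [Suc j..<Suc n]) (alpha n j)"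
      using e jj sprod_Q by simp
    have th: "(THE p. p \<in> {1..n} \<and> entry n i j = sprod n (rev [Suc p..<Suc n]) (alpha n p)) = j"
      by (rule the_equality) (use jj e sprod_Q Q_inj in auto)
    have c2: "\<exists>p\<in>{1..n}. entry n i j = sprod n (rev [Suc p..<Suc n]) (alpha n p)" using Q jj by blast
    have "tau n (entry n i j) = - alpha n j"
      unfolding tau_def by (simp only: nn c2 if_True if_False Let_def th)
    also have "\<dots> = entry n (sh n i) (sh n j)"
      using 2 jj by (simp add: entry_def sh_def)
    finally show ?thesis .
  next
    case 3
    have nn: "\<not> (\<exists>k\<in>{1..n}. entry n i j = - alpha n k)"
      using entry_notneg[of i n j] 3 j ne n by auto
    have nq: "\<not> (\<exists>k\<in>{1..n}. entry n i j = sprod n (rev [Suc k..<Suc n]) (alpha n k))"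
      using entry_notQ[of i n j] 3 j ne n sprod_Q by auto
    have "tau n (entry n i j) = cox n (entry n i j)"
      unfolding tau_def by (simp only: nn nq if_False)
    also have "\<dots> = entry n (sh n i) (sh n j)"
    proof -
      obtain a where a: "i = Suc a" "1 \<le> a" "a < n" using 3 by (cases i) auto
      obtain b where b: "j = Suc b" "b \<le> n" using j by (cases j) auto
      have si: "sh n i = Suc (Suc a)" using a by (simp add: sh_def)
      have c0: "\<And>v. cox n v 0 = v 0" using n by (simp add: cox_eq)
      have cS: "\<And>v y. cox n v (Suc y) = (if y = 0 then - v n else if Suc y \<le> n then v y else v (Suc y))"
        using n by (simp add: cox_eq)
      have ab: "a \<noteq> b" using ne a b by simp
      consider "a < b" "b < n" | "a < b" "b = n" | "b < a" using ab b by force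
      then show ?thesis
      proof cases
        case 1
        have e: "entry n i j = eps a - eps b" using 1 a b by (simp add: entry_def)
        have t: "entry n (sh n i) (sh n j) = eps (Suc a) - eps (Suc b)" using 1 a b si by (simp add: entry_def sh_def)
        show ?thesis unfolding e t
        proof (rule ext)
          fix x show "cox n (eps a - eps b) x = (eps (Suc a) - eps (Suc b)) x"
            using 1 a by (cases x) (auto simp: c0 cS eps_def)
        qed
      next
        case 2
        have e: "entry n i j = eps a - eps n" using 2 a b by (simp add: entry_def)
        have t: "entry n (sh n i) (sh n j) = eps 1 + eps (Suc a)" using 2 a b si by (simp add: entry_def sh_def)
        show ?thesis unfolding e t
        proof (rule ext)
          fix x show "cox n (eps a - eps n) x = (eps 1 + eps (Suc a)) x"
            using 2 a by (cases x) (auto simp: c0 cS eps_def)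
        qed
      next
        case 4: 3
        have e: "entry n i j = eps j + eps a" using 4 a b by (simp add: entry_def)
        have t: "entry n (sh n i) (sh n j) = eps (Suc j) + eps (Suc a)" using 4 a b si by (simp add: entry_def sh_def)
        show ?thesis unfolding e t
        proof (rule ext)
          fix x show "cox n (eps j + eps a) x = (eps (Suc j) + eps (Suc a)) x"
            using 4 a b by (cases x) (auto simp: c0 cS eps_def)
        qed
      qed
    qed
    finally show ?thesis .
  qed
qed

definition rot :: "nat \<Rightarrow> nat \<Rightarrow> nat \<Rightarrow> nat" where
  "rot n m x = (x - 1 + m) mod Suc n + 1"

definition mu :: "nat \<Rightarrow> nat \<Rightarrow> nat" where
  "mu n i = (Suc n + 1 - i) mod Suc n"

lemma rot_in: "rot n m x \<in> {1..Suc n}"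
  unfolding rot_def by (auto simp: Suc_le_eq)

lemma rot_0: "x \<in> {1..Suc n} \<Longrightarrow> rot n 0 x = x"
  unfolding rot_def by auto

lemma rot_inj: assumes "x \<in> {1..Suc n}" "y \<in> {1..Suc n}" "rot n m x = rot n m y" shows "x = y"
proof -
  have "(x - 1 + m) mod Suc n = (y - 1 + m) mod Suc n" using assms(3) by (simp add: rot_def)
  then have "[x - 1 + m = y - 1 + m] (mod Suc n)" by (simp add: cong_def)
  then have "[x - 1 = y - 1] (mod Suc n)" by (simp add: cong_add_rcancel_nat)
  then have "(x - 1) mod Suc n = (y - 1) mod Suc n" by (simp add: cong_def)
  then show ?thesis using assms(1,2) by auto
qed

lemma rot_Suc: assumes "x \<in> {1..Suc n}" shows "rot n (Suc m) x = sh n (rot n m x)"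
proof -
  define r where "r = (x - 1 + m) mod Suc n"
  have 1: "(x - 1 + Suc m) mod Suc n = Suc r mod Suc n"
    unfolding r_def by (simp add: mod_Suc_eq)
  have 2: "r < Suc n" unfolding r_def by simp
  show ?thesis
  proof (cases "r = n")
    case True then show ?thesis unfolding rot_def sh_def 1 r_def[symmetric] by simp
  next
    case False then have "Suc r < Suc n" using 2 by simp
    then show ?thesis unfolding rot_def sh_def 1 r_def[symmetric] using False by simp
  qed
qed

lemma rot_mod: "rot n m x = rot n (m mod Suc n) x"
  unfolding rot_def by (simp add: mod_add_right_eq)

lemma rot_mu: assumes "i \<in> {1..Suc n}" shows "rot n (mu n i) i = 1"
proof (cases "i = 1")
  case True then show ?thesis by (simp add: rot_def mu_def)
next
  case False
  then have "Suc n + 1 - i < Suc n" using assms by auto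
  then have "mu n i = Suc n + 1 - i" unfolding mu_def by (rule mod_less)
  then show ?thesis using assms False by (simp add: rot_def)
qed

lemma mu_least: assumes "i \<in> {1..Suc n}" "rot n m i = 1" shows "mu n i \<le> m"
proof (rule ccontr)
  assume a: "\<not> mu n i \<le> m"
  have b: "mu n i \<le> Suc n + 1 - i" unfolding mu_def by (rule mod_less_eq_dividend)
  have "i \<noteq> 1" using a by (auto simp: mu_def)
  moreover have "m < Suc n + 1 - i" using a b by linarith
  ultimately have "i \<noteq> 1" "m < Suc n + 1 - i" by auto
  then have "(i - 1 + m) mod Suc n = i - 1 + m" "0 < i - 1 + m" using assms(1) by auto
  then show False using assms(2) by (simp add: rot_def)
qed

lemma mu_sh: assumes "n \<ge> 1" "i \<in> {1..Suc n}" shows "(mu n (sh n i) + 1) mod Suc n = mu n i"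
proof -
  consider "i = 1" | "2 \<le> i" "i \<le> n" | "i = Suc n" using assms by force
  then show ?thesis
  proof cases
    case 1 then show ?thesis using assms by (simp add: mu_def sh_def)
  next
    case 2 then show ?thesis using assms by (simp add: mu_def sh_def)
  next
    case 3 then show ?thesis using assms by (simp add: mu_def sh_def)
  qed
qed

lemma PP_rot: "(i,j) \<in> PP n \<Longrightarrow> (rot n m i, rot n m j) \<in> PP n"
  unfolding PP_def using rot_in rot_inj by fastforce

lemma tau_pow:
  assumes "1 \<le> n" "(i,j) \<in> PP n"
  shows "(tau n ^^ m) (entry n i j) = entry n (rot n m i) (rot n m j)"
proof (induct m)
  case 0 then show ?case using assms(2) by (simp add: rot_0 PP_def)
next
  case (Suc m)
  have ij: "i \<in> {1..Suc n}" "j \<in> {1..Suc n}" using assms(2) by (auto simp: PP_def)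
  have "(tau n ^^ Suc m) (entry n i j) = tau n (entry n (rot n m i) (rot n m j))" using Suc by simp
  also have "\<dots> = entry n (sh n (rot n m i)) (sh n (rot n m j))"
    by (rule tau_entry[OF assms(1) PP_rot[OF assms(2)]])
  also have "\<dots> = entry n (rot n (Suc m) i) (rot n (Suc m) j)" using ij by (simp add: rot_Suc)
  finally show ?case .
qed

definition Ssum :: "nat \<Rightarrow> vec \<Rightarrow> real" where
  "Ssum p b = (\<Sum>x\<in>{1..p}. b x)"

definition Lc :: "nat \<Rightarrow> vec \<Rightarrow> nat \<Rightarrow> real" where
  "Lc n b p = (if p < n then Ssum p b else Ssum n b / 2)"

lemma sum_alpha_prefix:
  assumes "k \<in> {1..n}" "p \<in> {1..n}"
  shows "(\<Sum>x\<in>{1..p}. alpha n k x) = (if p < n then (if k = p then 1 else 0) else (if k = n then 2 else 0))"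
proof (cases "k < n")
  case True
  have "(\<Sum>x\<in>{1..p}. alpha n k x) = (\<Sum>x\<in>{1..p}. eps k x) - (\<Sum>x\<in>{1..p}. eps (Suc k) x)"
    using True by (simp add: alpha_def sum_subtractf)
  also have "\<dots> = (if k \<le> p then 1 else 0) - (if Suc k \<le> p then 1 else 0)"
    using assms unfolding eps_def by (simp add: sum.delta')
  finally show ?thesis using True assms by auto
next
  case False
  then have kn: "k = n" using assms by auto
  have "(\<Sum>x\<in>{1..p}. alpha n k x) = 2 * (\<Sum>x\<in>{1..p}. eps n x)"
    using kn by (simp add: alpha_def smul_def sum_distrib_left)
  also have "\<dots> = (if n \<le> p then 2 else 0)"
    using assms unfolding eps_def by (simp add: sum.delta')
  finally show ?thesis using kn assms by auto
qed

lemma Lc_lin: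
  assumes "p \<in> {1..n}"
  shows "Lc n (\<Sum>k\<in>{1..n}. smul (c k) (alpha n k)) p = c p"
proof -
  have sw: "\<And>q. q \<in> {1..n} \<Longrightarrow> Ssum q (\<Sum>k\<in>{1..n}. smul (c k) (alpha n k)) = (\<Sum>k\<in>{1..n}. c k * (\<Sum>x\<in>{1..q}. alpha n k x))"
    unfolding Ssum_def sum_fun_app smul_def by (simp add: sum_distrib_left) (rule sum.swap)
  show ?thesis
  proof (cases "p < n")
    case True
    have "Lc n (\<Sum>k\<in>{1..n}. smul (c k) (alpha n k)) p = Ssum p (\<Sum>k\<in>{1..n}. smul (c k) (alpha n k))"
      using True by (simp add: Lc_def)
    also have "\<dots> = (\<Sum>k\<in>{1..n}. c k * (\<Sum>x\<in>{1..p}. alpha n k x))" by (rule sw[OF assms])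
    also have "\<dots> = (\<Sum>k\<in>{1..n}. c k * (if k = p then 1 else 0))"
    proof (rule sum.cong)
      fix k assume k: "k \<in> {1..n}"
      show "c k * (\<Sum>x\<in>{1..p}. alpha n k x) = c k * (if k = p then 1 else 0)"
        using sum_alpha_prefix[OF k assms] True by simp
    qed simp
    also have "\<dots> = c p" using assms by (simp add: if_distrib sum.delta' cong: if_cong)
    finally show ?thesis .
  next
    case False
    then have pn: "p = n" using assms by auto
    have "Lc n (\<Sum>k\<in>{1..n}. smul (c k) (alpha n k)) p = Ssum n (\<Sum>k\<in>{1..n}. smul (c k) (alpha n k)) / 2"
      using pn by (simp add: Lc_def)
    also have "\<dots> = (\<Sum>k\<in>{1..n}. c k * (\<Sum>x\<in>{1..n}. alpha n k x)) / 2" using sw[of n] assms pn by simp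
    also have "\<dots> = (\<Sum>k\<in>{1..n}. c k * (if k = n then 2 else 0)) / 2"
    proof -
      have "(\<Sum>k\<in>{1..n}. c k * (\<Sum>x\<in>{1..n}. alpha n k x)) = (\<Sum>k\<in>{1..n}. c k * (if k = n then 2 else 0))"
      proof (rule sum.cong)
        fix k assume k: "k \<in> {1..n}"
        show "c k * (\<Sum>x\<in>{1..n}. alpha n k x) = c k * (if k = n then 2 else 0)"
          using sum_alpha_prefix[OF k, of n] assms pn by simp
      qed simp
      then show ?thesis by simp
    qed
    also have "\<dots> = c p" using assms pn by (simp add: if_distrib sum.delta' cong: if_cong)
    finally show ?thesis .
  qed
qed

lemma alpha_pt:
  assumes "k \<in> {1..n}" "x \<in> {1..n}"
  shows "alpha n k x = (if k = x then (if x < n then 1 else 0) else 0)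
     - (if k = x - 1 then (if 2 \<le> x then 1 else 0) else 0)
     + (if k = n then (if x = n then 2 else 0) else 0)"
  using assms by (auto simp: alpha_def eps_def smul_def)

lemma alpha_out:
  assumes "k \<in> {1..n}" "x \<notin> {1..n}"
  shows "alpha n k x = 0"
  using assms by (auto simp: alpha_def eps_def smul_def)

lemma Ssum_Suc: "Ssum (Suc y) b = Ssum y b + b (Suc y)"
  unfolding Ssum_def by simp

lemma Ssum_0: "Ssum 0 b = 0"
  unfolding Ssum_def by simp

lemma Lc_span:
  assumes n: "1 \<le> n" and supp: "\<And>x. x \<notin> {1..n} \<Longrightarrow> b x = 0"
  shows "b = (\<Sum>k\<in>{1..n}. smul (Lc n b k) (alpha n k))"
proof (rule ext)
  fix x
  show "b x = (\<Sum>k\<in>{1..n}. smul (Lc n b k) (alpha n k)) x"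
  proof (cases "x \<in> {1..n}")
    case False
    then show ?thesis using supp by (simp add: sum_fun_app smul_def alpha_out)
  next
    case True
    have "(\<Sum>k\<in>{1..n}. smul (Lc n b k) (alpha n k)) x = (\<Sum>k\<in>{1..n}. Lc n b k * alpha n k x)"
      by (simp add: sum_fun_app smul_def)
    also have "\<dots> = (\<Sum>k\<in>{1..n}. (if k = x then Lc n b k * (if x < n then 1 else 0) else 0))
       - (\<Sum>k\<in>{1..n}. (if k = x - 1 then Lc n b k * (if 2 \<le> x then 1 else 0) else 0))
       + (\<Sum>k\<in>{1..n}. (if k = n then Lc n b k * (if x = n then 2 else 0) else 0))"
    proof -
      have "(\<Sum>k\<in>{1..n}. Lc n b k * alpha n k x) = (\<Sum>k\<in>{1..n}. (if k = x then Lc n b k * (if x < n then 1 else 0) else 0)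
       - (if k = x - 1 then Lc n b k * (if 2 \<le> x then 1 else 0) else 0)
       + (if k = n then Lc n b k * (if x = n then 2 else 0) else 0))"
        by (rule sum.cong) (use True in \<open>auto simp: alpha_pt algebra_simps\<close>)
      then show ?thesis by (simp add: sum.distrib sum_subtractf)
    qed
    also have "\<dots> = (if x < n then Lc n b x else 0) - (if 2 \<le> x then Lc n b (x - 1) else 0)
       + (if x = n then 2 * Lc n b n else 0)"
    proof -
      have s1: "(\<Sum>k\<in>{1..n}. (if k = x then Lc n b k * (if x < n then 1 else 0) else 0)) = (if x < n then Lc n b x else 0)"
        using True by (simp add: sum.delta)
      have s3: "(\<Sum>k\<in>{1..n}. (if k = n then Lc n b k * (if x = n then 2 else 0) else 0)) = (if x = n then 2 * Lc n b n else 0)"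
        using n by (simp add: sum.delta)
      have s2: "(\<Sum>k\<in>{1..n}. (if k = x - 1 then Lc n b k * (if 2 \<le> x then 1 else 0) else 0)) = (if 2 \<le> x then Lc n b (x - 1) else 0)"
      proof (cases "2 \<le> x")
        case True
        then have "x - 1 \<in> {1..n}" using \<open>x \<in> {1..n}\<close> by auto
        then show ?thesis using True by (simp add: sum.delta del: One_nat_def)
      next
        case False then show ?thesis by simp
      qed
      show ?thesis unfolding s1 s2 s3 ..
    qed
    also have "\<dots> = b x"
    proof -
      obtain y where y: "x = Suc y" using True by (cases x) auto
      show ?thesis
      proof (cases "x < n")
        case True
        then show ?thesis unfolding Lc_def y using y by (cases y) (auto simp: Ssum_Suc Ssum_0)
      next
        case False
        then have "x = n" using \<open>x \<in> {1..n}\<close> by auto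
        then show ?thesis unfolding Lc_def y using y by (cases y) (auto simp: Ssum_Suc Ssum_0)
      qed
    qed
    finally show ?thesis by simp
  qed
qed

lemma coeff_eq:
  assumes n: "1 \<le> n" and supp: "\<And>x. x \<notin> {1..n} \<Longrightarrow> b x = 0" and p: "p \<in> {1..n}"
  shows "coeff n b p = Lc n b p"
proof -
  define c0 where "c0 = (\<lambda>k. if k \<in> {1..n} then Lc n b k else 0)"
  have "(THE c. (\<forall>k. k \<notin> {1..n} \<longrightarrow> c k = 0) \<and> b = (\<Sum>k\<in>{1..n}. smul (c k) (alpha n k))) = c0"
  proof (rule the_equality)
    have "(\<Sum>k\<in>{1..n}. smul (c0 k) (alpha n k)) = (\<Sum>k\<in>{1..n}. smul (Lc n b k) (alpha n k))"
      by (rule sum.cong) (auto simp: c0_def)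
    then show "(\<forall>k. k \<notin> {1..n} \<longrightarrow> c0 k = 0) \<and> b = (\<Sum>k\<in>{1..n}. smul (c0 k) (alpha n k))"
      using Lc_span[OF n supp] by (simp add: c0_def)
  next
    fix c assume c: "(\<forall>k. k \<notin> {1..n} \<longrightarrow> c k = 0) \<and> b = (\<Sum>k\<in>{1..n}. smul (c k) (alpha n k))"
    show "c = c0"
    proof (rule ext)
      fix k show "c k = c0 k"
        using c Lc_lin[of k n c] by (cases "k \<in> {1..n}") (auto simp: c0_def)
    qed
  qed
  then show ?thesis unfolding coeff_def using p by (simp add: c0_def)
qed

abbreviation negs :: "nat \<Rightarrow> vec set" where
  "negs n \<equiv> uminus ` simple_roots n"

lemma entry_1: "j \<in> {2..Suc n} \<Longrightarrow> entry n 1 j = - alpha n (j - 1)"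
  by (simp add: entry_def)

lemma entry_neg: "(1,j) \<in> PP n \<Longrightarrow> entry n 1 j \<in> negs n"
  unfolding PP_def simple_roots_def entry_def by force

lemma entry_pos:
  assumes "(i,j) \<in> PP n" "i \<noteq> 1"
  shows "entry n i j \<in> pos_roots n"
proof -
  have i: "2 \<le> i" "i \<le> Suc n" and j: "1 \<le> j" "j \<le> Suc n" and ne: "i \<noteq> j"
    using assms by (auto simp: PP_def)
  consider "i < j" | "j < i - 1" | "j = i - 1" using ne by linarith
  then show ?thesis
  proof cases
    case 1
    then have "entry n i j = eps (i-1) - eps (j-1)" using i by (simp add: entry_def)
    then have "\<exists>a c. entry n i j = eps a - eps c \<and> 1 \<le> a \<and> a < c \<and> c \<le> n"
      using 1 i j by (intro exI[of _ "i-1"] exI[of _ "j-1"]) auto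
    then show ?thesis unfolding pos_roots_def by blast
  next
    case 2
    then have "entry n i j = eps j + eps (i-1)" using i by (simp add: entry_def)
    then have "\<exists>a c. entry n i j = eps a + eps c \<and> 1 \<le> a \<and> a < c \<and> c \<le> n"
      using 2 i j by (intro exI[of _ "j"] exI[of _ "i-1"]) auto
    then show ?thesis unfolding pos_roots_def by blast
  next
    case 3
    then have "entry n i j = smul 2 (eps j)" using i by (auto simp: entry_def smul_def fun_eq_iff)
    then have "\<exists>a. entry n i j = smul 2 (eps a) \<and> 1 \<le> a \<and> a \<le> n"
      using 3 i j by (intro exI[of _ "j"]) auto
    then show ?thesis unfolding pos_roots_def by blast
  qed
qed

lemma entry_AP: "(i,j) \<in> PP n \<Longrightarrow> entry n i j \<in> almost_pos n"
  unfolding almost_pos_def using entry_neg entry_pos by (cases "i = 1") auto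

lemma neg_iff:
  assumes "(i,j) \<in> PP n"
  shows "entry n i j \<in> negs n \<longleftrightarrow> i = 1"
proof
  assume "entry n i j \<in> negs n"
  then obtain k where k: "k \<in> {1..n}" "entry n i j = - alpha n k" unfolding simple_roots_def by auto
  show "i = 1"
  proof (rule ccontr)
    assume "i \<noteq> 1"
    then show False using entry_notneg[of i n j k] k assms by (auto simp: PP_def)
  qed
next
  assume "i = 1" then show "entry n i j \<in> negs n" using entry_neg assms by simp
qed

lemma pos_entry:
  assumes "b \<in> pos_roots n"
  shows "\<exists>i j. (i,j) \<in> PP n \<and> i \<noteq> 1 \<and> b = entry n i j"
  using assms unfolding pos_roots_def
proof (elim UnE CollectE exE conjE)
  fix a c assume h: "b = eps a - eps c" "1 \<le> a" "a < c" "c \<le> n"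
  then show ?thesis by (intro exI[of _ "Suc a"] exI[of _ "Suc c"]) (auto simp: PP_def entry_def)
next
  fix a c assume h: "b = eps a + eps c" "1 \<le> a" "a < c" "c \<le> n"
  then show ?thesis by (intro exI[of _ "Suc c"] exI[of _ a]) (auto simp: PP_def entry_def)
next
  fix a assume h: "b = smul 2 (eps a)" "1 \<le> a" "a \<le> n"
  then show ?thesis by (intro exI[of _ "Suc a"] exI[of _ a]) (auto simp: PP_def entry_def smul_def fun_eq_iff)
qed

lemma AP_entry:
  assumes "b \<in> almost_pos n"
  shows "\<exists>i j. (i,j) \<in> PP n \<and> b = entry n i j"
proof (cases "b \<in> pos_roots n")
  case True then show ?thesis using pos_entry by blast
next
  case False
  then obtain k where k: "k \<in> {1..n}" "b = - alpha n k" using assms unfolding almost_pos_def simple_roots_def by auto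
  then show ?thesis by (intro exI[of _ 1] exI[of _ "Suc k"]) (auto simp: PP_def entry_def)
qed

lemma entry_supp:
  assumes "(i,j) \<in> PP n" "i \<noteq> 1" "x \<notin> {1..n}"
  shows "entry n i j x = 0"
  using assms by (auto simp: PP_def entry_def eps_def)

lemma Ssum_eps: "Ssum p (eps a) = (if 1 \<le> a \<and> a \<le> p then 1 else 0)"
  unfolding Ssum_def eps_def by (simp add: sum.delta')

lemma Ssum_add: "Ssum p (u + v) = Ssum p u + Ssum p v"
  unfolding Ssum_def by (simp add: sum.distrib)

lemma Ssum_diff: "Ssum p (u - v) = Ssum p u - Ssum p v"
  unfolding Ssum_def by (simp add: sum_subtractf)

lemma Lc_int:
  assumes "(k,l) \<in> PP n" "k \<noteq> 1"
  shows "Lc n (entry n k l) p \<in> \<int>"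
proof -
  have k: "2 \<le> k" "k \<le> Suc n" and l: "1 \<le> l" "l \<le> Suc n" and ne: "k \<noteq> l"
    using assms by (auto simp: PP_def)
  show ?thesis
  proof (cases "k < l")
    case True
    then have e: "entry n k l = eps (k-1) - eps (l-1)" using k by (simp add: entry_def)
    show ?thesis unfolding e Lc_def Ssum_diff Ssum_eps using k l True by auto
  next
    case False
    then have e: "entry n k l = eps l + eps (k-1)" using k by (simp add: entry_def)
    show ?thesis unfolding e Lc_def Ssum_add Ssum_eps using k l False ne by auto
  qed
qed

lemma Lc_col:
  assumes "(k,l) \<in> PP n" "k \<noteq> 1" "l \<noteq> 1"
  shows "Lc n (entry n k l) (l - 1) = 0"
proof -
  have k: "2 \<le> k" "k \<le> Suc n" and l: "2 \<le> l" "l \<le> Suc n" and ne: "k \<noteq> l"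
    using assms by (auto simp: PP_def)
  show ?thesis
  proof (cases "k < l")
    case True
    then have e: "entry n k l = eps (k-1) - eps (l-1)" using k by (simp add: entry_def)
    show ?thesis unfolding e Lc_def Ssum_diff Ssum_eps using k l True by auto
  next
    case False
    then have e: "entry n k l = eps l + eps (k-1)" using k by (simp add: entry_def)
    show ?thesis unfolding e Lc_def Ssum_add Ssum_eps using k l False ne by auto
  qed
qed

lemma rot_add: assumes "x \<in> {1..Suc n}" shows "rot n m (rot n m' x) = rot n (m + m') x"
proof -
  obtain y where "x = Suc y" using assms by (cases x) auto
  then show ?thesis unfolding rot_def by (simp add: mod_add_right_eq add_ac)
qed

lemma sh_rot: "x \<in> {1..Suc n} \<Longrightarrow> sh n x = rot n 1 x"
  using rot_Suc[of x n 0] rot_0[of x n] by simp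

lemma tau_AP: assumes "1 \<le> n" "a \<in> almost_pos n" shows "tau n a \<in> almost_pos n"
proof -
  obtain i j where ij: "(i,j) \<in> PP n" "a = entry n i j" using AP_entry[OF assms(2)] by blast
  have "tau n a = entry n (rot n 1 i) (rot n 1 j)" using tau_pow[OF assms(1) ij(1), of 1] ij(2) by simp
  then show ?thesis using entry_AP PP_rot[OF ij(1)] by simp
qed

lemma tau_pow_AP: assumes "1 \<le> n" "a \<in> almost_pos n" shows "(tau n ^^ m) a \<in> almost_pos n"
  by (induct m) (use assms tau_AP in auto)

lemma least_entry:
  assumes "1 \<le> n" "(i,j) \<in> PP n"
  shows "(LEAST m. (tau n ^^ m) (entry n i j) \<in> negs n) = mu n i"
proof (rule Least_equality)
  have i: "i \<in> {1..Suc n}" using assms(2) by (auto simp: PP_def)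
  show "(tau n ^^ mu n i) (entry n i j) \<in> negs n"
    unfolding tau_pow[OF assms] using neg_iff[OF PP_rot[OF assms(2)], of "mu n i"] rot_mu[OF i] by simp
  fix m assume "(tau n ^^ m) (entry n i j) \<in> negs n"
  then have "rot n m i = 1" unfolding tau_pow[OF assms] using neg_iff[OF PP_rot[OF assms(2)]] by simp
  then show "mu n i \<le> m" using mu_least[OF i] by simp
qed

definition init :: "nat \<Rightarrow> vec \<Rightarrow> vec \<Rightarrow> int" where
  "init n a b = (if b \<in> negs n then 0 else \<lfloor>coeff n b (THE p. p \<in> {1..n} \<and> a = - alpha n p)\<rfloor>)"

definition f0 :: "nat \<Rightarrow> vec \<Rightarrow> vec \<Rightarrow> int" where
  "f0 n a b = (if a \<in> almost_pos n \<and> b \<in> almost_pos n then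
     init n ((tau n ^^ (LEAST m. (tau n ^^ m) a \<in> negs n)) a) ((tau n ^^ (LEAST m. (tau n ^^ m) a \<in> negs n)) b)
     else 0)"

lemma f0_entry:
  assumes "1 \<le> n" "(i,j) \<in> PP n" "(k,l) \<in> PP n"
  shows "f0 n (entry n i j) (entry n k l) =
    init n (entry n (rot n (mu n i) i) (rot n (mu n i) j)) (entry n (rot n (mu n i) k) (rot n (mu n i) l))"
  unfolding f0_def least_entry[OF assms(1,2)]
  using entry_AP[OF assms(2)] entry_AP[OF assms(3)] by (simp add: tau_pow[OF assms(1,2)] tau_pow[OF assms(1,3)])

lemma f0_inv:
  assumes n: "1 \<le> n" and a: "a \<in> almost_pos n" and b: "b \<in> almost_pos n"
  shows "f0 n (tau n a) (tau n b) = f0 n a b"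
proof -
  obtain i j where ij: "(i,j) \<in> PP n" "a = entry n i j" using AP_entry[OF a] by blast
  obtain k l where kl: "(k,l) \<in> PP n" "b = entry n k l" using AP_entry[OF b] by blast
  have ta: "tau n a = entry n (rot n 1 i) (rot n 1 j)" using tau_pow[OF n ij(1), of 1] ij(2) by simp
  have tb: "tau n b = entry n (rot n 1 k) (rot n 1 l)" using tau_pow[OF n kl(1), of 1] kl(2) by simp
  have i: "i \<in> {1..Suc n}" using ij by (auto simp: PP_def)
  have key: "\<And>x. x \<in> {1..Suc n} \<Longrightarrow> rot n (mu n (rot n 1 i)) (rot n 1 x) = rot n (mu n i) x"
  proof -
    fix x assume x: "x \<in> {1..Suc n}"
    have "rot n (mu n (rot n 1 i)) (rot n 1 x) = rot n (mu n (sh n i) + 1) x"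
      using rot_add[OF x] sh_rot[OF i] by simp
    also have "\<dots> = rot n ((mu n (sh n i) + 1) mod Suc n) x" by (rule rot_mod)
    also have "\<dots> = rot n (mu n i) x" using mu_sh[OF n i] by simp
    finally show "rot n (mu n (rot n 1 i)) (rot n 1 x) = rot n (mu n i) x" .
  qed
  have xs: "i \<in> {1..Suc n}" "j \<in> {1..Suc n}" "k \<in> {1..Suc n}" "l \<in> {1..Suc n}" using ij kl by (auto simp: PP_def)
  have 1: "f0 n (tau n a) (tau n b) = init n (entry n (rot n (mu n (rot n 1 i)) (rot n 1 i)) (rot n (mu n (rot n 1 i)) (rot n 1 j)))
      (entry n (rot n (mu n (rot n 1 i)) (rot n 1 k)) (rot n (mu n (rot n 1 i)) (rot n 1 l)))"
    unfolding ta tb by (rule f0_entry[OF n PP_rot[OF ij(1)] PP_rot[OF kl(1)]])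
  have 2: "f0 n a b = init n (entry n (rot n (mu n i) i) (rot n (mu n i) j)) (entry n (rot n (mu n i) k) (rot n (mu n i) l))"
    unfolding ij(2) kl(2) by (rule f0_entry[OF n ij(1) kl(1)])
  show ?thesis unfolding 1 2 using key[OF xs(1)] key[OF xs(2)] key[OF xs(3)] key[OF xs(4)] by simp
qed

lemma coeff_entry:
  assumes n: "1 \<le> n" and kl: "(k,l) \<in> PP n" "k \<noteq> 1" and p: "p \<in> {1..n}"
  shows "coeff n (entry n k l) p = Lc n (entry n k l) p"
  by (rule coeff_eq[OF n _ p]) (use entry_supp[OF kl] in auto)

lemma f0_compat:
  assumes n: "1 \<le> n"
  shows "is_compat_degree n (f0 n)"
  unfolding is_compat_degree_def
proof (intro conjI ballI)
  fix a b assume "a \<in> almost_pos n" "b \<in> almost_pos n"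
  then show "f0 n (tau n a) (tau n b) = f0 n a b" using f0_inv n by blast
next
  fix p q assume p: "p \<in> {1..n}" and q: "q \<in> {1..n}"
  have e: "- alpha n p = entry n 1 (Suc p)" "- alpha n q = entry n 1 (Suc q)" using p q by (auto simp: entry_def)
  have pp: "(1, Suc p) \<in> PP n" "(1, Suc q) \<in> PP n" using p q by (auto simp: PP_def)
  have m0: "mu n 1 = 0" by (simp add: mu_def)
  have r: "rot n 0 1 = 1" "rot n 0 (Suc p) = Suc p" "rot n 0 (Suc q) = Suc q" using p q by (simp_all add: rot_0)
  have nq: "entry n 1 (Suc q) \<in> negs n" by (rule entry_neg[OF pp(2)])
  show "f0 n (- alpha n p) (- alpha n q) = 0"
    unfolding e f0_entry[OF n pp] m0 r using nq by (simp add: init_def)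
next
  fix p b assume p: "p \<in> {1..n}" and b: "b \<in> pos_roots n"
  obtain k l where kl: "(k,l) \<in> PP n" "k \<noteq> 1" "b = entry n k l" using pos_entry[OF b] by blast
  have e: "- alpha n p = entry n 1 (Suc p)" using p by (auto simp: entry_def)
  have pp: "(1, Suc p) \<in> PP n" using p by (auto simp: PP_def)
  have m0: "mu n 1 = 0" by (simp add: mu_def)
  have kk: "k \<in> {1..Suc n}" "l \<in> {1..Suc n}" using kl by (auto simp: PP_def)
  have r: "rot n 0 1 = 1" "rot n 0 (Suc p) = Suc p" "rot n 0 k = k" "rot n 0 l = l" using p kk by (simp_all add: rot_0)
  have nn: "entry n k l \<notin> negs n" using neg_iff[OF kl(1)] kl(2) by simp
  have th: "(THE p'. p' \<in> {1..n} \<and> entry n 1 (Suc p) = - alpha n p') = p"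
    by (rule the_equality) (use p e alpha_neg_inj in auto)
  have "f0 n (- alpha n p) b = \<lfloor>coeff n (entry n k l) p\<rfloor>"
    unfolding e kl(3) f0_entry[OF n pp kl(1)] m0 r init_def th using nn by simp
  moreover have "coeff n (entry n k l) p \<in> \<int>" using coeff_entry[OF n kl(1,2) p] Lc_int[OF kl(1,2)] by simp
  ultimately show "real_of_int (f0 n (- alpha n p) b) = coeff n b p" using kl(3) by simp
qed

lemma f_pow:
  assumes n: "1 \<le> n" and f: "is_compat_degree n f" and a: "a \<in> almost_pos n" and b: "b \<in> almost_pos n"
  shows "f ((tau n ^^ m) a) ((tau n ^^ m) b) = f a b"
proof (induct m)
  case 0 then show ?case by simp
next
  case (Suc m)
  have "f ((tau n ^^ Suc m) a) ((tau n ^^ Suc m) b) = f ((tau n ^^ m) a) ((tau n ^^ m) b)"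
    using f tau_pow_AP[OF n a, of m] tau_pow_AP[OF n b, of m] unfolding is_compat_degree_def by simp
  then show ?case using Suc by simp
qed

lemma f_val:
  assumes n: "1 \<le> n" and f: "is_compat_degree n f" and ij: "(i,j) \<in> PP n" and kl: "(k,l) \<in> PP n"
  shows "real_of_int (f (entry n i j) (entry n k l)) =
    (if rot n (mu n i) k = 1 then 0
     else coeff n (entry n (rot n (mu n i) k) (rot n (mu n i) l)) (rot n (mu n i) j - 1))"
proof -
  define m where "m = mu n i"
  have i: "i \<in> {1..Suc n}" using ij by (auto simp: PP_def)
  have rm: "rot n m i = 1" using rot_mu[OF i] by (simp add: m_def)
  have eq: "f (entry n i j) (entry n k l) = f (entry n 1 (rot n m j)) (entry n (rot n m k) (rot n m l))"
    using f_pow[OF n f entry_AP[OF ij] entry_AP[OF kl], of m] unfolding tau_pow[OF n ij] tau_pow[OF n kl] rm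
    by simp
  have pj: "(1, rot n m j) \<in> PP n" using PP_rot[OF ij, of m] rm by simp
  then have j': "rot n m j - 1 \<in> {1..n}" and ej: "entry n 1 (rot n m j) = - alpha n (rot n m j - 1)"
    by (auto simp: PP_def entry_def)
  have pk: "(rot n m k, rot n m l) \<in> PP n" using PP_rot[OF kl] by simp
  show ?thesis
  proof (cases "rot n m k = 1")
    case True
    then have k': "rot n m l - 1 \<in> {1..n}" "entry n (rot n m k) (rot n m l) = - alpha n (rot n m l - 1)"
      using pk by (auto simp: PP_def entry_def)
    have "f (entry n i j) (entry n k l) = 0"
      using eq f j' k' ej unfolding is_compat_degree_def by simp
    then show ?thesis using True by (simp add: m_def)
  next
    case False
    have "entry n (rot n m k) (rot n m l) \<in> pos_roots n" using entry_pos[OF pk False] .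
    then have "real_of_int (f (entry n i j) (entry n k l)) = coeff n (entry n (rot n m k) (rot n m l)) (rot n m j - 1)"
      using eq f j' ej unfolding is_compat_degree_def by simp
    then show ?thesis using False by (simp add: m_def)
  qed
qed

lemma compat_unique:
  assumes n: "1 \<le> n" and f: "is_compat_degree n f" and g: "is_compat_degree n g"
    and a: "a \<in> almost_pos n" and b: "b \<in> almost_pos n"
  shows "f a b = g a b"
proof -
  obtain i j where ij: "(i,j) \<in> PP n" "a = entry n i j" using AP_entry[OF a] by blast
  obtain k l where kl: "(k,l) \<in> PP n" "b = entry n k l" using AP_entry[OF b] by blast
  have "real_of_int (f a b) = real_of_int (g a b)"
    unfolding ij(2) kl(2) f_val[OF n f ij(1) kl(1)] f_val[OF n g ij(1) kl(1)] ..
  then show ?thesis by simp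
qed

lemma compat_degree_props:
  assumes n: "1 \<le> n"
  shows "is_compat_degree n (compat_degree n)"
proof -
  let ?P = "\<lambda>f. is_compat_degree n f \<and> (\<forall>a b. \<not> (a \<in> almost_pos n \<and> b \<in> almost_pos n) \<longrightarrow> f a b = 0)"
  have ex: "?P (f0 n)" using f0_compat[OF n] by (simp add: f0_def)
  have un: "\<And>g. ?P g \<Longrightarrow> g = f0 n"
  proof -
    fix g assume g: "?P g"
    show "g = f0 n"
    proof (intro ext)
      fix a b show "g a b = f0 n a b"
        using compat_unique[OF n _ f0_compat[OF n]] g ex by metis
    qed
  qed
  have "compat_degree n = f0 n" unfolding compat_degree_def
  proof (rule the_equality)
    show "?P (f0 n)" by (rule ex)
  next
    fix g assume "?P g" then show "g = f0 n" by (rule un)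
  qed
  then show ?thesis using f0_compat[OF n] by simp
qed

theorem lemma4p7:
  fixes n i j k :: nat
  assumes "n \<ge> 1"
    and "i \<in> {1..n+1}" and "j \<in> {1..n+1}" and "k \<in> {1..n+1}"
    and "j \<noteq> i" and "k \<noteq> i" and "j \<noteq> k"
  shows "compatible n (entry n i j) (entry n i k)
       \<and> compatible n (entry n j i) (entry n k i)"
proof
  have D: "is_compat_degree n (compat_degree n)" by (rule compat_degree_props[OF assms(1)])
  have ij: "(i,j) \<in> PP n" "(i,k) \<in> PP n" "(j,i) \<in> PP n" "(k,i) \<in> PP n"
    using assms by (auto simp: PP_def)
  have ii: "i \<in> {1..Suc n}" "j \<in> {1..Suc n}" "k \<in> {1..Suc n}" using assms by auto
  show "compatible n (entry n i j) (entry n i k)"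
    using f_val[OF assms(1) D ij(1) ij(2)] rot_mu[OF ii(1)] unfolding compatible_def by simp
  define m where "m = mu n j"
  have rj: "rot n m j = 1" using rot_mu[OF ii(2)] by (simp add: m_def)
  have rk: "rot n m k \<noteq> 1" using rot_inj[OF ii(2) ii(3), of m] rj assms(7) by auto
  have pk: "(rot n m k, rot n m i) \<in> PP n" using PP_rot[OF ij(4)] .
  have ri: "rot n m i \<noteq> 1" using rot_inj[OF ii(2) ii(1), of m] rj assms(5) by auto
  have n1: "1 \<le> n" using assms(1) by simp
  have "coeff n (entry n (rot n m k) (rot n m i)) (rot n m i - 1) = 0"
  proof -
    have "rot n m i - 1 \<in> {1..n}" using ri rot_in[of n m i] by auto
    then show ?thesis using coeff_entry[OF n1 pk rk] Lc_col[OF pk rk ri] by simp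
  qed
  then show "compatible n (entry n j i) (entry n k i)"
    using f_val[OF assms(1) D ij(3) ij(4)] rk unfolding compatible_def m_def by simp
qed

end
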